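(* Let $M$ be a finite rectangular monoid, $k$ a splitting field for $M$, and $X,Y\in\Lambda(M)$ with $X\le Y$. Let $U,V$ be simple $kG_X$-, $kG_Y$-modules, respectively (viewed as simple modules for $kM$, $kM_\ell$ and $kM_r$). Then the number of arrows from $U$ to $V$ in $Q(kM)$ equals the number of arrows from $U$ to $V$ in $Q(kM_\ell)$, and the number of arrows from $V$ to $U$ in $Q(kM)$ equals the number of arrows from $V$ to $U$ in $Q(kM_r)$.
   Context: $M$ finite monoid, $E(M)$ its idempotents, $m^\omega$ the idempotent power of $m$. $M$ is rectangular if each set $\{f\in E(M): MfM=MeM\}$ is closed under multiplication. $\Lambda(M)$: ideals $MeM$, $e\in E(M)$, ordered by inclusion; $\sigma(m)=Mm^\omega M$. Fix $e_X$ with $Me_XM=X$; $G_X$ is the group of units of $e_XMe_X$; a $kG_X$-module is a $kM$-module via $m\mapsto e_Xme_X$ if $\sigma(m)\supseteq X$ and $m\mapsto 0$ otherwise. A two-element right (resp. left) zero subsemigroup is $\{e,f\}$, $e\ne f$, with $ef=f,fe=e$ (resp. $ef=e,fe=f$). $M_\ell$ (resp. $M_r$) is the quotient of $M$ by the smallest congruence identifying the two elements of each two-element right (resp. left) zero subsemigroup; the map $m\mapsto(\sigma(m),\rho_{\sigma(m)}(m))$ to the associated Clifford monoid factors through $M_\ell$ and $M_r$, so $M,M_\ell,M_r$ have the same simple modules (those inflated from the $G_X$). $k$ splits $M$ if $kM/\mathrm{rad}(kM)$ is a product of matrix algebras over $k$. Quiver: $\dim\mathrm{Ext}^1(S,T)$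 arrows $S\to T$. *)

theory Defs
  imports "HOL-Algebra.Group" "Jordan_Normal_Form.Matrix" "HOL-Library.Function_Algebras"
begin

definition idems :: "('a, 'b) monoid_scheme \<Rightarrow> 'a set" where
  "idems M = {e \<in> carrier M. e \<otimes>\<^bsub>M\<^esub> e = e}"

definition pideal :: "('a, 'b) monoid_scheme \<Rightarrow> 'a \<Rightarrow> 'a set" where
  "pideal M x = {a \<otimes>\<^bsub>M\<^esub> x \<otimes>\<^bsub>M\<^esub> b | a b. a \<in> carrier M \<and> b \<in> carrier M}"

definition rectangular :: "('a, 'b) monoid_scheme \<Rightarrow> bool" where
  "rectangular M \<longleftrightarrow> (\<forall>e \<in> idems M. \<forall>f \<in> idems M. \<forall>g \<in> idems M.
      pideal M f = pideal M e \<and> pideal M g = pideal M e \<longrightarrow>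
      f \<otimes>\<^bsub>M\<^esub> g \<in> idems M \<and> pideal M (f \<otimes>\<^bsub>M\<^esub> g) = pideal M e)"

definition Lambda :: "('a, 'b) monoid_scheme \<Rightarrow> 'a set set" where
  "Lambda M = pideal M ` idems M"

text \<open>The idempotent power m^omega (unique in a finite monoid).\<close>
definition omega_pow :: "('a, 'b) monoid_scheme \<Rightarrow> 'a \<Rightarrow> 'a" where
  "omega_pow M m = (THE e. e \<in> idems M \<and> (\<exists>n::nat. n \<ge> 1 \<and> e = m [^]\<^bsub>M\<^esub> n))"

definition sigma :: "('a, 'b) monoid_scheme \<Rightarrow> 'a \<Rightarrow> 'a set" where
  "sigma M m = pideal M (omega_pow M m)"

text \<open>G_X for X = M e M: the group of units of the monoid e M e (identity e).\<close>
definition local_group :: "('a, 'b) monoid_scheme \<Rightarrow> 'a \<Rightarrow> 'a monoid" where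
  "local_group M e =
    (let eMe = {e \<otimes>\<^bsub>M\<^esub> m \<otimes>\<^bsub>M\<^esub> e | m. m \<in> carrier M} in
     \<lparr> carrier = {g \<in> eMe. \<exists>h \<in> eMe. g \<otimes>\<^bsub>M\<^esub> h = e \<and> h \<otimes>\<^bsub>M\<^esub> g = e},
       mult = mult M, one = e \<rparr>)"

definition is_congruence :: "('a, 'b) monoid_scheme \<Rightarrow> ('a \<times> 'a) set \<Rightarrow> bool" where
  "is_congruence M R \<longleftrightarrow> equiv (carrier M) R \<and>
     (\<forall>a b c d. (a, b) \<in> R \<and> (c, d) \<in> R \<longrightarrow> (a \<otimes>\<^bsub>M\<^esub> c, b \<otimes>\<^bsub>M\<^esub> d) \<in> R)"

definition cong_gen :: "('a, 'b) monoid_scheme \<Rightarrow> ('a \<times> 'a) set \<Rightarrow> ('a \<times> 'a) set" where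
  "cong_gen M P = \<Inter> {R. is_congruence M R \<and> P \<subseteq> R}"

definition right_zero_pairs :: "('a, 'b) monoid_scheme \<Rightarrow> ('a \<times> 'a) set" where
  "right_zero_pairs M = {(e, f). e \<in> carrier M \<and> f \<in> carrier M \<and> e \<noteq> f \<and>
      e \<otimes>\<^bsub>M\<^esub> f = f \<and> f \<otimes>\<^bsub>M\<^esub> e = e}"

definition left_zero_pairs :: "('a, 'b) monoid_scheme \<Rightarrow> ('a \<times> 'a) set" where
  "left_zero_pairs M = {(e, f). e \<in> carrier M \<and> f \<in> carrier M \<and> e \<noteq> f \<and>
      e \<otimes>\<^bsub>M\<^esub> f = e \<and> f \<otimes>\<^bsub>M\<^esub> e = f}"

definition quot_monoid :: "('a, 'b) monoid_scheme \<Rightarrow> ('a \<times> 'a) set \<Rightarrow> 'a set monoid" where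
  "quot_monoid M R =
     \<lparr> carrier = carrier M // R,
       mult = (\<lambda>A B. R `` {(SOME a. a \<in> A) \<otimes>\<^bsub>M\<^esub> (SOME b. b \<in> B)}),
       one = R `` {\<one>\<^bsub>M\<^esub>} \<rparr>"

definition M_l :: "('a, 'b) monoid_scheme \<Rightarrow> 'a set monoid" where
  "M_l M = quot_monoid M (cong_gen M (right_zero_pairs M))"

definition M_r :: "('a, 'b) monoid_scheme \<Rightarrow> 'a set monoid" where
  "M_r M = quot_monoid M (cong_gen M (left_zero_pairs M))"

definition is_rep :: "('a, 'b) monoid_scheme \<Rightarrow> ('a \<Rightarrow> 'k::field mat) \<Rightarrow> nat \<Rightarrow> bool" where
  "is_rep G \<rho> n \<longleftrightarrow> (\<forall>x \<in> carrier G. \<rho> x \<in> carrier_mat n n) \<and> \<rho> \<one>\<^bsub>G\<^esub> = 1\<^sub>m n \<and>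
     (\<forall>x \<in> carrier G. \<forall>y \<in> carrier G. \<rho> (x \<otimes>\<^bsub>G\<^esub> y) = \<rho> x * \<rho> y)"

definition invariant_subspace ::
  "('a, 'b) monoid_scheme \<Rightarrow> ('a \<Rightarrow> 'k::field mat) \<Rightarrow> nat \<Rightarrow> 'k vec set \<Rightarrow> bool" where
  "invariant_subspace G \<rho> n W \<longleftrightarrow> W \<subseteq> carrier_vec n \<and> 0\<^sub>v n \<in> W \<and>
     (\<forall>v \<in> W. \<forall>w \<in> W. v + w \<in> W) \<and> (\<forall>c. \<forall>v \<in> W. c \<cdot>\<^sub>v v \<in> W) \<and>
     (\<forall>x \<in> carrier G. \<forall>v \<in> W. \<rho> x *\<^sub>v v \<in> W)"

definition simple_rep :: "('a, 'b) monoid_scheme \<Rightarrow> ('a \<Rightarrow> 'k::field mat) \<Rightarrow> nat \<Rightarrow> bool" where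
  "simple_rep G \<rho> n \<longleftrightarrow> is_rep G \<rho> n \<and> n > 0 \<and>
     (\<forall>W. invariant_subspace G \<rho> n W \<longrightarrow> W = {0\<^sub>v n} \<or> W = carrier_vec n)"

text \<open>k splits M: every simple kM-module S has End_{kM}(S) = k
  (equivalently kM/rad kM is a product of matrix algebras over k).\<close>
definition splits :: "'k::field itself \<Rightarrow> ('a, 'b) monoid_scheme \<Rightarrow> bool" where
  "splits (TYPE('k)) M \<longleftrightarrow> (\<forall>(\<rho> :: 'a \<Rightarrow> 'k mat) n. simple_rep M \<rho> n \<longrightarrow>
     (\<forall>A \<in> carrier_mat n n. (\<forall>x \<in> carrier M. A * \<rho> x = \<rho> x * A) \<longrightarrow>
        (\<exists>c. A = c \<cdot>\<^sub>m 1\<^sub>m n)))"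

definition infl :: "('a, 'b) monoid_scheme \<Rightarrow> 'a \<Rightarrow> ('a \<Rightarrow> 'k::field mat) \<Rightarrow> nat \<Rightarrow> 'a \<Rightarrow> 'k mat" where
  "infl M e \<rho> n m = (if pideal M e \<subseteq> sigma M m then \<rho> (e \<otimes>\<^bsub>M\<^esub> m \<otimes>\<^bsub>M\<^esub> e) else 0\<^sub>m n n)"

text \<open>The same module viewed as a module over a quotient monoid M/R (well defined
  since the action factors through the quotient).\<close>
definition infl_quot :: "('a, 'b) monoid_scheme \<Rightarrow> 'a \<Rightarrow> ('a \<Rightarrow> 'k::field mat) \<Rightarrow> nat \<Rightarrow> 'a set \<Rightarrow> 'k mat" where
  "infl_quot M e \<rho> n A = infl M e \<rho> n (SOME m. m \<in> A)"

text \<open>Ext^1(S,T) is computed as derivations M \<rightarrow> Hom_k(S,T) modulo inner derivations;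
  a derivation is stored as a function on M with values (t x s)-matrices given by entry functions,
  zero outside the carrier and outside the index range.\<close>

definition to_mat :: "nat \<Rightarrow> nat \<Rightarrow> (nat \<Rightarrow> nat \<Rightarrow> 'k) \<Rightarrow> 'k mat" where
  "to_mat t s f = mat t s (\<lambda>(i, j). f i j)"

definition cocycles ::
  "('a, 'b) monoid_scheme \<Rightarrow> ('a \<Rightarrow> 'k::field mat) \<Rightarrow> nat \<Rightarrow> ('a \<Rightarrow> 'k mat) \<Rightarrow> nat
     \<Rightarrow> ('a \<Rightarrow> nat \<Rightarrow> nat \<Rightarrow> 'k) set" where
  "cocycles M \<rho>S s \<rho>T t = {d.
     (\<forall>x. x \<notin> carrier M \<longrightarrow> d x = 0) \<and>
     (\<forall>x i j. (i \<ge> t \<or> j \<ge> s) \<longrightarrow> d x i j = 0) \<and>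
     (\<forall>x \<in> carrier M. \<forall>y \<in> carrier M.
        to_mat t s (d (x \<otimes>\<^bsub>M\<^esub> y)) = \<rho>T x * to_mat t s (d y) + to_mat t s (d x) * \<rho>S y)}"

definition coboundaries ::
  "('a, 'b) monoid_scheme \<Rightarrow> ('a \<Rightarrow> 'k::field mat) \<Rightarrow> nat \<Rightarrow> ('a \<Rightarrow> 'k mat) \<Rightarrow> nat
     \<Rightarrow> ('a \<Rightarrow> nat \<Rightarrow> nat \<Rightarrow> 'k) set" where
  "coboundaries M \<rho>S s \<rho>T t = {d. \<exists>B \<in> carrier_mat t s. \<forall>x.
     d x = (if x \<in> carrier M
            then (\<lambda>i j. if i < t \<and> j < s then (\<rho>T x * B - B * \<rho>S x) $$ (i, j) else 0)
            else 0)}"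

definition fscale :: "'k::field \<Rightarrow> ('a \<Rightarrow> nat \<Rightarrow> nat \<Rightarrow> 'k) \<Rightarrow> ('a \<Rightarrow> nat \<Rightarrow> nat \<Rightarrow> 'k)" where
  "fscale c d = (\<lambda>x i j. c * d x i j)"

text \<open>dim_k Ext^1_{kM}(S,T) = number of arrows S \<rightarrow> T in the quiver Q(kM).\<close>
definition ext1_dim ::
  "('a, 'b) monoid_scheme \<Rightarrow> ('a \<Rightarrow> 'k::field mat) \<Rightarrow> nat \<Rightarrow> ('a \<Rightarrow> 'k mat) \<Rightarrow> nat \<Rightarrow> nat" where
  "ext1_dim M \<rho>S s \<rho>T t =
     vector_space.dim fscale (cocycles M \<rho>S s \<rho>T t) - vector_space.dim fscale (coboundaries M \<rho>S s \<rho>T t)"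

end

theory Submission
  imports Defs
begin


locale rmon = monoid G for G (structure) +
  assumes fin: "finite (carrier G)" and rect: "rectangular G"
begin

lemma pideal_mem: "x \<in> carrier G \<Longrightarrow> a \<in> carrier G \<Longrightarrow> b \<in> carrier G \<Longrightarrow> a \<otimes> x \<otimes> b \<in> pideal G x"
  unfolding pideal_def by blast

lemma pideal_self: "x \<in> carrier G \<Longrightarrow> x \<in> pideal G x"
  using pideal_mem[of x \<one> \<one>] by simp

lemma pideal_sub: "x \<in> carrier G \<Longrightarrow> y \<in> pideal G x \<Longrightarrow> pideal G y \<subseteq> pideal G x"
proof
  fix z assume x: "x \<in> carrier G" and y: "y \<in> pideal G x" and z: "z \<in> pideal G y"
  from y obtain a b where ab: "a \<in> carrier G" "b \<in> carrier G" "y = a \<otimes> x \<otimes> b" unfolding pideal_def by blast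
  from z obtain c d where cd: "c \<in> carrier G" "d \<in> carrier G" "z = c \<otimes> y \<otimes> d" unfolding pideal_def by blast
  have "z = (c \<otimes> a) \<otimes> x \<otimes> (b \<otimes> d)" using ab cd x by (simp add: m_assoc)
  then show "z \<in> pideal G x" using ab cd x pideal_mem by simp
qed

lemma pideal_carrier: "x \<in> carrier G \<Longrightarrow> pideal G x \<subseteq> carrier G"
  unfolding pideal_def by auto

lemma idem_pow: "e \<in> carrier G \<Longrightarrow> e \<otimes> e = e \<Longrightarrow> (k::nat) \<ge> 1 \<Longrightarrow> e [^] k = e"
proof (induction k)
  case 0 then show ?case by simp
next
  case (Suc k) then show ?case by (cases k) auto
qed

lemma pow_idem_exists:
  assumes m: "m \<in> carrier G"
  shows "\<exists>k::nat\<ge>1. m [^] k \<otimes> m [^] k = m [^] k"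
proof -
  let ?f = "\<lambda>i::nat. m [^] i"
  have "\<not> inj_on ?f {..card (carrier G)}"
  proof
    assume "inj_on ?f {..card (carrier G)}"
    then have "card (?f ` {..card (carrier G)}) = Suc (card (carrier G))"
      by (simp add: card_image)
    moreover have "card (?f ` {..card (carrier G)}) \<le> card (carrier G)"
      using m fin by (intro card_mono) auto
    ultimately show False by simp
  qed
  then obtain i j :: nat where ij: "i < j" "m [^] i = m [^] j"
    unfolding inj_on_def by (metis linorder_neqE_nat)
  define p where "p = j - i"
  have p: "p \<ge> 1" "j = i + p" using ij p_def by auto
  have per: "m [^] (i + q + k * p) = m [^] (i + q)" for q k
  proof (induction k)
    case 0 then show ?case by simp
  next
    case (Suc k)
    have "m [^] (i + q + Suc k * p) = m [^] (i + p) \<otimes> m [^] (q + k * p)"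
      using m by (simp add: nat_pow_mult algebra_simps)
    also have "\<dots> = m [^] i \<otimes> m [^] (q + k * p)" using ij p by simp
    also have "\<dots> = m [^] (i + q + k * p)" using m by (simp add: nat_pow_mult algebra_simps)
    finally show ?case using Suc by simp
  qed
  define n where "n = (i + 1) * p"
  have "i * 1 \<le> i * p" using p by (intro mult_le_mono2) auto
  then have "i \<le> i * p" by simp
  then have "n \<ge> i" "n \<ge> 1" using p unfolding n_def by (simp_all add: algebra_simps, linarith)
  then obtain q where q: "n = i + q" by (metis le_add_diff_inverse)
  have "m [^] n \<otimes> m [^] n = m [^] (i + q + (i+1) * p)"
    using m q by (simp add: nat_pow_mult n_def algebra_simps)
  also have "\<dots> = m [^] n" using per[of q "i+1"] q by simp
  finally show ?thesis using \<open>n \<ge> 1\<close> by blast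
qed

lemma omega_unique:
  assumes m: "m \<in> carrier G" and a: "(a::nat) \<ge> 1" "m[^]a \<otimes> m[^]a = m[^]a"
    and b: "(b::nat) \<ge> 1" "m[^]b \<otimes> m[^]b = m[^]b"
  shows "m [^] a = m [^] b"
proof -
  have "m [^] (a * b) = (m[^]a)[^]b" using m by (simp add: nat_pow_pow)
  also have "\<dots> = m[^]a" using idem_pow[of "m[^]a" b] a b m by simp
  finally have 1: "m [^] (a * b) = m[^]a" .
  have "m [^] (a * b) = (m[^]b)[^]a" using m by (simp add: nat_pow_pow mult.commute)
  also have "\<dots> = m[^]b" using idem_pow[of "m[^]b" a] a b m by simp
  finally show ?thesis using 1 by simp
qed

lemma omega_prop:
  assumes m: "m \<in> carrier G"
  shows "omega_pow G m \<in> idems G \<and> (\<exists>n::nat\<ge>1. omega_pow G m = m [^] n)"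
proof -
  obtain k :: nat where k: "k \<ge> 1" "m [^] k \<otimes> m [^] k = m [^] k" using pow_idem_exists[OF m] by blast
  have "\<exists>!e. e \<in> idems G \<and> (\<exists>n::nat. n \<ge> 1 \<and> e = m [^] n)"
  proof
    show "m[^]k \<in> idems G \<and> (\<exists>n::nat. n \<ge> 1 \<and> m[^]k = m [^] n)"
      using k m unfolding idems_def by (auto intro!: exI[of _ k])
  next
    fix e assume "e \<in> idems G \<and> (\<exists>n::nat. n \<ge> 1 \<and> e = m [^] n)"
    then obtain n :: nat where "n \<ge> 1" "e = m[^]n" "e \<otimes> e = e" unfolding idems_def by auto
    then show "e = m[^]k" using omega_unique[OF m] k by metis
  qed
  from theI'[OF this] show ?thesis unfolding omega_pow_def by blast
qed

lemma omega_idem: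
  assumes "e \<in> idems G" shows "omega_pow G e = e"
proof -
  have e: "e \<in> carrier G" "e \<otimes> e = e" using assms unfolding idems_def by auto
  obtain n :: nat where n: "n \<ge> 1" "omega_pow G e = e [^] n" using omega_prop[OF e(1)] by blast
  then show ?thesis using idem_pow e by simp
qed

lemma tail: "u \<otimes> v = w \<Longrightarrow> u \<in> carrier G \<Longrightarrow> v \<in> carrier G \<Longrightarrow> z \<in> carrier G \<Longrightarrow> u \<otimes> (v \<otimes> z) = w \<otimes> z"
  by (simp add: m_assoc[symmetric])

lemma idem_tail: "e \<otimes> e = e \<Longrightarrow> e \<in> carrier G \<Longrightarrow> z \<in> carrier G \<Longrightarrow> e \<otimes> (e \<otimes> z) = e \<otimes> z"
  by (simp add: m_assoc[symmetric])

lemma idemsD: "e \<in> idems G \<Longrightarrow> e \<in> carrier G \<and> e \<otimes> e = e"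
  unfolding idems_def by auto

lemma rectJ:
  assumes "e \<in> idems G" "f \<in> idems G" "h \<in> idems G" "pideal G f = pideal G e" "pideal G h = pideal G e"
  shows "f \<otimes> h \<in> idems G \<and> pideal G (f \<otimes> h) = pideal G e"
proof -
  have "\<forall>e \<in> idems G. \<forall>f \<in> idems G. \<forall>g \<in> idems G.
      pideal G f = pideal G e \<and> pideal G g = pideal G e \<longrightarrow>
      f \<otimes> g \<in> idems G \<and> pideal G (f \<otimes> g) = pideal G e"
    using rect unfolding rectangular_def by blast
  from this[rule_format, OF assms(1) assms(2) assms(3)] show ?thesis using assms(4,5) by blast
qed

lemma L:
  assumes a: "a \<in> idems G" and b: "b \<in> idems G" and ab: "pideal G a = pideal G b"
  shows "a \<otimes> b \<otimes> a = a"
proof -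
  have ac: "a \<in> carrier G" "a \<otimes> a = a" using idemsD[OF a] by auto
  have bc: "b \<in> carrier G" "b \<otimes> b = b" using idemsD[OF b] by auto
  define x where "x = a \<otimes> b \<otimes> a"
  have 1: "a \<otimes> b \<in> idems G \<and> pideal G (a \<otimes> b) = pideal G a" using rectJ[OF a a b refl ab[symmetric]] .
  have 2: "x \<in> idems G \<and> pideal G x = pideal G a" unfolding x_def using rectJ[OF a conjunct1[OF 1] a conjunct2[OF 1] refl] .
  have xc: "x \<in> carrier G" "x \<otimes> x = x" using idemsD 2 by auto
  have ax: "a \<otimes> x = x" "x \<otimes> a = x" unfolding x_def using ac bc
    by (simp_all add: m_assoc idem_tail)
  have "a \<in> pideal G x" using 2 pideal_self ac by simp
  then obtain p q where pq: "p \<in> carrier G" "q \<in> carrier G" "a = p \<otimes> x \<otimes> q" unfolding pideal_def by blast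
  have "p \<otimes> x \<otimes> a \<otimes> q = p \<otimes> (x \<otimes> a) \<otimes> q" using pq(1,2) xc ac by (simp add: m_assoc)
  also have "\<dots> = p \<otimes> x \<otimes> q" using ax(2) by simp
  finally have pxaq: "p \<otimes> x \<otimes> a \<otimes> q = a" using pq(3) by simp
  have claim: "a = (p \<otimes> x) [^] k \<otimes> a \<otimes> q [^] k" for k :: nat
  proof (induction k)
    case 0 then show ?case using ac by simp
  next
    case (Suc k)
    have "(p \<otimes> x) [^] Suc k \<otimes> a \<otimes> q [^] Suc k = (p \<otimes> x) [^] k \<otimes> (p \<otimes> x \<otimes> a \<otimes> q) \<otimes> q [^] k"
      using pq(1,2) xc ac nat_pow_Suc2[of q k] by (simp add: m_assoc)
    also have "\<dots> = (p \<otimes> x) [^] k \<otimes> a \<otimes> q [^] k" using pxaq by simp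
    finally have "(p \<otimes> x) [^] Suc k \<otimes> a \<otimes> q [^] Suc k = (p \<otimes> x) [^] k \<otimes> a \<otimes> q [^] k" .
    from Suc.IH this show ?case by (rule trans[OF _ sym])
  qed
  obtain k :: nat where k: "k \<ge> 1" "(p \<otimes> x) [^] k \<otimes> (p \<otimes> x) [^] k = (p \<otimes> x) [^] k"
    using pow_idem_exists[of "p \<otimes> x"] pq(1,2) xc by auto
  define E where "E = (p \<otimes> x) [^] k"
  have Ec: "E \<in> carrier G" using pq(1,2) xc unfolding E_def by simp
  have "E \<otimes> a = E \<otimes> ((p \<otimes> x) [^] k \<otimes> a \<otimes> q [^] k)" using claim[of k] by (rule arg_cong)
  also have "\<dots> = (E \<otimes> E) \<otimes> a \<otimes> q [^] k" using Ec pq(1,2) xc ac unfolding E_def by (simp add: m_assoc)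
  also have "\<dots> = (p \<otimes> x) [^] k \<otimes> a \<otimes> q [^] k" using k unfolding E_def by simp
  also have "\<dots> = a" using claim[of k] by (rule sym)
  finally have Ea: "E \<otimes> a = a" .
  obtain k' where k': "k = Suc k'" using k by (cases k) auto
  define s where "s = (p \<otimes> x) [^] k' \<otimes> p"
  have sc: "s \<in> carrier G" using pq(1,2) xc unfolding s_def by simp
  have "E \<otimes> a = s \<otimes> (x \<otimes> a)" unfolding E_def s_def k' using pq(1,2) xc ac by (simp add: m_assoc)
  then have as: "a = s \<otimes> x" using Ea ax by simp
  have "a \<otimes> x = s \<otimes> x" using as sc xc by (simp add: m_assoc)
  then have "a = x" using ax(1) as by metis
  then show ?thesis unfolding x_def by metis
qed

lemma RB:
  assumes e: "e \<in> idems G" and a: "a \<in> idems G" "pideal G a = pideal G e"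
    and b: "b \<in> idems G" "pideal G b = pideal G e"
    and c: "c \<in> idems G" "pideal G c = pideal G e"
  shows "a \<otimes> b \<otimes> c = a \<otimes> c"
proof -
  have ac: "a \<in> carrier G" "b \<in> carrier G" "c \<in> carrier G" using a b c idemsD by auto
  have AC: "a \<otimes> c \<in> idems G \<and> pideal G (a \<otimes> c) = pideal G e" using rectJ[OF e a(1) c(1) a(2) c(2)] .
  have AB: "a \<otimes> b \<in> idems G \<and> pideal G (a \<otimes> b) = pideal G e" using rectJ[OF e a(1) b(1) a(2) b(2)] .
  have ABC: "a \<otimes> b \<otimes> c \<in> idems G \<and> pideal G (a \<otimes> b \<otimes> c) = pideal G e"
    using rectJ[OF e conjunct1[OF AB] c(1) conjunct2[OF AB] c(2)] .
  have ac': "pideal G a = pideal G c" using a(2) c(2) by (rule trans[OF _ sym])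
  have 1: "a \<otimes> c \<otimes> a = a" using L[OF a(1) c(1) ac'] .
  have 2: "c \<otimes> a \<otimes> c = c" using L[OF c(1) a(1) ac'[symmetric]] .
  have "a \<otimes> b \<otimes> c = (a \<otimes> c \<otimes> a) \<otimes> b \<otimes> (c \<otimes> a \<otimes> c)" using 1 2 by simp
  also have "\<dots> = (a \<otimes> c) \<otimes> (a \<otimes> b \<otimes> c) \<otimes> (a \<otimes> c)" using ac by (simp add: m_assoc)
  also have "\<dots> = a \<otimes> c"
  proof -
    have "pideal G (a \<otimes> c) = pideal G (a \<otimes> b \<otimes> c)" using AC ABC by (metis)
    then show ?thesis using L[OF conjunct1[OF AC] conjunct1[OF ABC]] by blast
  qed
  finally show ?thesis .
qed


lemma U:
  assumes e: "e \<in> carrier G" "e \<otimes> e = e"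
    and y: "y \<in> carrier G" "e \<otimes> y = y" "y \<otimes> e = y"
    and r: "r \<in> carrier G" "e \<otimes> r = r" "r \<otimes> e = r"
    and yr: "y \<otimes> r = e"
  shows "r \<otimes> y = e"
proof -
  let ?A = "{z \<in> carrier G. e \<otimes> z = z \<and> z \<otimes> e = z}"
  have fA: "finite ?A" using fin by simp
  have im: "(\<lambda>z. r \<otimes> z) ` ?A \<subseteq> ?A"
  proof
    fix u assume "u \<in> (\<lambda>z. r \<otimes> z) ` ?A"
    then obtain z where z: "z \<in> carrier G" "e \<otimes> z = z" "z \<otimes> e = z" "u = r \<otimes> z" by blast
    have "e \<otimes> (r \<otimes> z) = r \<otimes> z" using r z e by (simp add: m_assoc[symmetric])
    moreover have "(r \<otimes> z) \<otimes> e = r \<otimes> z" using r z e by (simp add: m_assoc)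
    ultimately show "u \<in> ?A" using z r by simp
  qed
  have inj: "inj_on (\<lambda>z. r \<otimes> z) ?A"
  proof (rule inj_onI)
    fix z1 z2 assume z1: "z1 \<in> ?A" and z2: "z2 \<in> ?A" and eq: "r \<otimes> z1 = r \<otimes> z2"
    have "(y \<otimes> r) \<otimes> z1 = (y \<otimes> r) \<otimes> z2" using eq y r z1 z2 by (simp add: m_assoc)
    then show "z1 = z2" using yr z1 z2 by simp
  qed
  have "e \<in> ?A" using e by simp
  then have "e \<in> (\<lambda>z. r \<otimes> z) ` ?A" using endo_inj_surj[OF fA im inj] by simp
  then obtain z where z: "z \<in> carrier G" "e \<otimes> z = z" "z \<otimes> e = z" "r \<otimes> z = e" by blast
  have "y = y \<otimes> (r \<otimes> z)" using y z by simp
  also have "\<dots> = (y \<otimes> r) \<otimes> z" using y r z by (simp add: m_assoc)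
  also have "\<dots> = z" using yr z by simp
  finally show ?thesis using z by simp
qed

definition good :: "'a \<Rightarrow> 'a \<Rightarrow> bool" where
  "good e m \<longleftrightarrow> (\<exists>w\<in>carrier G. e = e \<otimes> m \<otimes> w)"

definition unitL :: "'a \<Rightarrow> 'a \<Rightarrow> bool" where
  "unitL e g \<longleftrightarrow> (\<exists>r\<in>carrier G. e \<otimes> r = r \<and> r \<otimes> e = r \<and> g \<otimes> r = e \<and> r \<otimes> g = e)"

lemma G1:
  assumes e: "e \<in> idems G" and m: "m \<in> carrier G" and w: "w \<in> carrier G" and emw: "e = e \<otimes> m \<otimes> w"
  shows "unitL e (e \<otimes> m \<otimes> e)"
proof -
  have ec: "e \<in> carrier G" "e \<otimes> e = e" using idemsD[OF e] by auto
  have emw': "e \<otimes> (m \<otimes> (w \<otimes> z)) = e \<otimes> z" if "z \<in> carrier G" for z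
    using emw ec m w that by (metis m_assoc m_closed)
  have emw0: "e \<otimes> (m \<otimes> w) = e" using emw ec m w by (simp add: m_assoc)
  define f where "f = w \<otimes> e \<otimes> m"
  have fc: "f \<in> carrier G" using w ec m f_def by simp
  have ff: "f \<otimes> f = f" unfolding f_def using w ec m by (simp add: m_assoc emw' idem_tail)
  have fid: "f \<in> idems G" using fc ff unfolding idems_def by simp
  have "f \<in> pideal G e" unfolding f_def using pideal_mem w ec m by simp
  then have s1: "pideal G f \<subseteq> pideal G e" using pideal_sub ec by simp
  have "e = e \<otimes> m \<otimes> f \<otimes> w" unfolding f_def using w ec m by (simp add: m_assoc emw' idem_tail emw0)
  then have "e \<in> pideal G f" using pideal_mem[of f "e \<otimes> m" w] fc ec m w by simp
  then have s2: "pideal G e \<subseteq> pideal G f" using pideal_sub fc by simp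
  have fe: "pideal G f = pideal G e" using s1 s2 by (rule antisym)
  have fef: "f \<otimes> e \<otimes> f = f" using L[OF fid e fe] .
  have xf: "e \<otimes> m \<otimes> f = e \<otimes> m" unfolding f_def using w ec m by (simp add: m_assoc emw' idem_tail)
  have "e = e \<otimes> m \<otimes> w" by (rule emw)
  also have "\<dots> = (e \<otimes> m \<otimes> f) \<otimes> w" using xf by simp
  also have "\<dots> = (e \<otimes> m) \<otimes> (f \<otimes> e \<otimes> f) \<otimes> w" using fef by simp
  also have "\<dots> = ((e \<otimes> m \<otimes> f) \<otimes> e) \<otimes> (f \<otimes> w)" using ec m w fc by (simp add: m_assoc)
  also have "\<dots> = (e \<otimes> m \<otimes> e) \<otimes> (f \<otimes> w)" using xf by simp
  finally have e1: "e = (e \<otimes> m \<otimes> e) \<otimes> (f \<otimes> w)" .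
  define r where "r = e \<otimes> (f \<otimes> w) \<otimes> e"
  have rc: "r \<in> carrier G" using r_def ec fc w by simp
  have er: "e \<otimes> r = r" "r \<otimes> e = r" unfolding r_def using ec fc w by (simp_all add: m_assoc idem_tail)
  have "(e \<otimes> m \<otimes> e) \<otimes> r = ((e \<otimes> m \<otimes> e) \<otimes> (f \<otimes> w)) \<otimes> e"
    unfolding r_def using ec fc w m by (simp add: m_assoc idem_tail)
  also have "\<dots> = e" using e1[symmetric] ec by simp
  finally have yr: "(e \<otimes> m \<otimes> e) \<otimes> r = e" .
  have ry: "r \<otimes> (e \<otimes> m \<otimes> e) = e"
    by (rule U[OF ec _ _ _ rc er yr]) (use ec m in \<open>simp_all add: m_assoc idem_tail\<close>)
  show ?thesis unfolding unitL_def using rc er yr ry by blast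
qed


lemma fR:
  assumes e: "e \<in> idems G" and m: "m \<in> carrier G" and w: "w \<in> carrier G" and emw: "e = e \<otimes> m \<otimes> w"
  shows "w \<otimes> e \<otimes> m \<in> idems G \<and> pideal G (w \<otimes> e \<otimes> m) = pideal G e \<and> e \<otimes> m \<otimes> (w \<otimes> e \<otimes> m) = e \<otimes> m"
proof -
  have ec: "e \<in> carrier G" "e \<otimes> e = e" using idemsD[OF e] by auto
  have emw': "e \<otimes> (m \<otimes> (w \<otimes> z)) = e \<otimes> z" if "z \<in> carrier G" for z
    using emw ec m w that by (metis m_assoc m_closed)
  have emw0: "e \<otimes> (m \<otimes> w) = e" using emw ec m w by (simp add: m_assoc)
  define f where "f = w \<otimes> e \<otimes> m"
  have fc: "f \<in> carrier G" using w ec m f_def by simp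
  have ff: "f \<otimes> f = f" unfolding f_def using w ec m by (simp add: m_assoc emw' idem_tail)
  have fid: "f \<in> idems G" using fc ff unfolding idems_def by simp
  have "f \<in> pideal G e" unfolding f_def using pideal_mem w ec m by simp
  then have s1: "pideal G f \<subseteq> pideal G e" using pideal_sub ec by simp
  have "e = e \<otimes> m \<otimes> f \<otimes> w" unfolding f_def using w ec m by (simp add: m_assoc emw' idem_tail emw0)
  then have "e \<in> pideal G f" using pideal_mem[of f "e \<otimes> m" w] fc ec m w by simp
  then have s2: "pideal G e \<subseteq> pideal G f" using pideal_sub fc by simp
  have fe: "pideal G f = pideal G e" using s1 s2 by (rule antisym)
  have xf: "e \<otimes> m \<otimes> f = e \<otimes> m" unfolding f_def using w ec m by (simp add: m_assoc emw' idem_tail)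
  show ?thesis using fid fe xf unfolding f_def by blast
qed

lemma hL:
  assumes e: "e \<in> idems G" and m: "m \<in> carrier G" and w: "w \<in> carrier G" and wme: "e = w \<otimes> m \<otimes> e"
  shows "m \<otimes> e \<otimes> w \<in> idems G \<and> pideal G (m \<otimes> e \<otimes> w) = pideal G e \<and> (m \<otimes> e \<otimes> w) \<otimes> (m \<otimes> e) = m \<otimes> e"
proof -
  have ec: "e \<in> carrier G" "e \<otimes> e = e" using idemsD[OF e] by auto
  have wme': "w \<otimes> (m \<otimes> (e \<otimes> z)) = e \<otimes> z" if "z \<in> carrier G" for z
    using wme ec m w that by (metis m_assoc m_closed)
  have wme0: "w \<otimes> (m \<otimes> e) = e" using wme ec m w by (simp add: m_assoc)
  define h where "h = m \<otimes> e \<otimes> w"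
  have hc: "h \<in> carrier G" using w ec m h_def by simp
  have hh: "h \<otimes> h = h" unfolding h_def using w ec m by (simp add: m_assoc wme' idem_tail)
  have hid: "h \<in> idems G" using hc hh unfolding idems_def by simp
  have "h \<in> pideal G e" unfolding h_def using pideal_mem m ec w by simp
  then have s1: "pideal G h \<subseteq> pideal G e" using pideal_sub ec by simp
  have "e = w \<otimes> h \<otimes> (m \<otimes> e)" unfolding h_def using w ec m by (simp add: m_assoc wme' idem_tail wme0)
  then have "e \<in> pideal G h" using pideal_mem[of h w "m \<otimes> e"] hc ec m w by simp
  then have s2: "pideal G e \<subseteq> pideal G h" using pideal_sub hc by simp
  have he: "pideal G h = pideal G e" using s1 s2 by (rule antisym)
  have hy: "h \<otimes> (m \<otimes> e) = m \<otimes> e" unfolding h_def using w ec m by (simp add: m_assoc wme' idem_tail wme0)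
  show ?thesis using hid he hy unfolding h_def by blast
qed

lemma GL:
  assumes e: "e \<in> idems G" and m: "m \<in> carrier G" and w: "w \<in> carrier G" and wme: "e = w \<otimes> m \<otimes> e"
  shows "unitL e (e \<otimes> m \<otimes> e)"
proof -
  have ec: "e \<in> carrier G" "e \<otimes> e = e" using idemsD[OF e] by auto
  define h where "h = m \<otimes> e \<otimes> w"
  have H: "h \<in> idems G" "pideal G h = pideal G e" "h \<otimes> (m \<otimes> e) = m \<otimes> e"
    using hL[OF e m w wme] unfolding h_def by auto
  have hc: "h \<in> carrier G" using idemsD[OF H(1)] by simp
  have heh: "h \<otimes> e \<otimes> h = h" using L[OF H(1) e H(2)] .
  have "m \<otimes> e = h \<otimes> (m \<otimes> e)" using H(3) by simp
  also have "\<dots> = (h \<otimes> e \<otimes> h) \<otimes> (m \<otimes> e)" using heh by simp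
  also have "\<dots> = h \<otimes> e \<otimes> (h \<otimes> (m \<otimes> e))" using hc ec m by (simp add: m_assoc)
  also have "\<dots> = h \<otimes> (e \<otimes> m \<otimes> e)" using H(3) hc ec m by (simp add: m_assoc)
  finally have y: "m \<otimes> e = h \<otimes> (e \<otimes> m \<otimes> e)" .
  have "e = w \<otimes> (m \<otimes> e)" using wme w m ec by (simp add: m_assoc)
  also have "\<dots> = (w \<otimes> h) \<otimes> (e \<otimes> m \<otimes> e)" using y w hc ec m by (simp add: m_assoc)
  finally have e1: "e = (w \<otimes> h) \<otimes> (e \<otimes> m \<otimes> e)" .
  define l where "l = e \<otimes> (w \<otimes> h) \<otimes> e"
  have lc: "l \<in> carrier G" using l_def ec hc w by simp
  have el: "e \<otimes> l = l" "l \<otimes> e = l" unfolding l_def using ec hc w by (simp_all add: m_assoc idem_tail)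
  have "l \<otimes> (e \<otimes> m \<otimes> e) = e \<otimes> ((w \<otimes> h) \<otimes> (e \<otimes> m \<otimes> e))"
    unfolding l_def using ec hc w m by (simp add: m_assoc idem_tail)
  also have "\<dots> = e" using e1[symmetric] ec by simp
  finally have ly: "l \<otimes> (e \<otimes> m \<otimes> e) = e" .
  have yl: "(e \<otimes> m \<otimes> e) \<otimes> l = e"
    by (rule U[OF ec lc el _ _ _ ly]) (use ec m in \<open>simp_all add: m_assoc idem_tail\<close>)
  show ?thesis unfolding unitL_def using lc el yl ly by blast
qed

lemma unit_good:
  assumes e: "e \<in> idems G" and m: "m \<in> carrier G" and u: "unitL e (e \<otimes> m \<otimes> e)"
  shows "good e m" "\<exists>w\<in>carrier G. e = w \<otimes> m \<otimes> e"
proof -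
  have ec: "e \<in> carrier G" "e \<otimes> e = e" using idemsD[OF e] by auto
  obtain r where r: "r \<in> carrier G" "e \<otimes> r = r" "r \<otimes> e = r" "(e \<otimes> m \<otimes> e) \<otimes> r = e" "r \<otimes> (e \<otimes> m \<otimes> e) = e"
    using u unfolding unitL_def by blast
  have "e = e \<otimes> m \<otimes> (e \<otimes> r)" using r ec m by (simp add: m_assoc)
  then show "good e m" unfolding good_def using r ec by blast
  have "(r \<otimes> e) \<otimes> m \<otimes> e = r \<otimes> (e \<otimes> m \<otimes> e)" using r(1) ec(1) m by (simp add: m_assoc)
  then have "e = (r \<otimes> e) \<otimes> m \<otimes> e" using r(5) by simp
  then show "\<exists>w\<in>carrier G. e = w \<otimes> m \<otimes> e" using r ec by blast
qed

lemma good_unit: "e \<in> idems G \<Longrightarrow> m \<in> carrier G \<Longrightarrow> good e m \<Longrightarrow> unitL e (e \<otimes> m \<otimes> e)"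
  unfolding good_def using G1 by blast

lemma H3:
  assumes e: "e \<in> idems G" and m: "m \<in> carrier G" and n: "n \<in> carrier G"
    and gm: "good e m" and gn: "good e n"
  shows "e \<otimes> (m \<otimes> n) \<otimes> e = (e \<otimes> m \<otimes> e) \<otimes> (e \<otimes> n \<otimes> e)"
proof -
  have ec: "e \<in> carrier G" "e \<otimes> e = e" using idemsD[OF e] by auto
  obtain w where w: "w \<in> carrier G" "e = e \<otimes> m \<otimes> w" using gm unfolding good_def by blast
  obtain w' where w': "w' \<in> carrier G" "e = w' \<otimes> n \<otimes> e" using unit_good(2)[OF e n good_unit[OF e n gn]] by blast
  define f where "f = w \<otimes> e \<otimes> m"
  define h where "h = n \<otimes> e \<otimes> w'"
  have F: "f \<in> idems G" "pideal G f = pideal G e" "e \<otimes> m \<otimes> f = e \<otimes> m"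
    using fR[OF e m w(1) w(2)] unfolding f_def by auto
  have H: "h \<in> idems G" "pideal G h = pideal G e" "h \<otimes> (n \<otimes> e) = n \<otimes> e"
    using hL[OF e n w'(1) w'(2)] unfolding h_def by auto
  have fc: "f \<in> carrier G" and hc: "h \<in> carrier G" using idemsD F(1) H(1) by auto
  have rb: "f \<otimes> e \<otimes> h = f \<otimes> h" using RB[OF e F(1,2) e refl H(1,2)] .
  have "e \<otimes> (m \<otimes> n) \<otimes> e = (e \<otimes> m) \<otimes> (n \<otimes> e)" using ec m n by (simp add: m_assoc)
  also have "\<dots> = (e \<otimes> m \<otimes> f) \<otimes> (h \<otimes> (n \<otimes> e))" using F(3) H(3) by simp
  also have "\<dots> = (e \<otimes> m) \<otimes> (f \<otimes> h) \<otimes> (n \<otimes> e)" using ec m n fc hc by (simp add: m_assoc)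
  also have "\<dots> = (e \<otimes> m) \<otimes> (f \<otimes> e \<otimes> h) \<otimes> (n \<otimes> e)" using rb by simp
  also have "\<dots> = (e \<otimes> m \<otimes> f) \<otimes> e \<otimes> (h \<otimes> (n \<otimes> e))" using ec m n fc hc by (simp add: m_assoc)
  also have "\<dots> = (e \<otimes> m) \<otimes> e \<otimes> (n \<otimes> e)" using F(3) H(3) by simp
  also have "\<dots> = (e \<otimes> m \<otimes> e) \<otimes> (e \<otimes> n \<otimes> e)" using ec m n by (simp add: m_assoc idem_tail)
  finally show ?thesis .
qed

lemma good_mult:
  assumes e: "e \<in> idems G" and m: "m \<in> carrier G" and n: "n \<in> carrier G"
    and gm: "good e m" and gn: "good e n"
  shows "good e (m \<otimes> n)"
proof -
  have ec: "e \<in> carrier G" "e \<otimes> e = e" using idemsD[OF e] by auto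
  obtain r where r: "r \<in> carrier G" "e \<otimes> r = r" "r \<otimes> e = r" "(e \<otimes> m \<otimes> e) \<otimes> r = e"
    using good_unit[OF e m gm] unfolding unitL_def by blast
  obtain r' where r': "r' \<in> carrier G" "e \<otimes> r' = r'" "r' \<otimes> e = r'" "(e \<otimes> n \<otimes> e) \<otimes> r' = e"
    using good_unit[OF e n gn] unfolding unitL_def by blast
  have c: "e \<in> carrier G" "m \<in> carrier G" "n \<in> carrier G" "r \<in> carrier G" "r' \<in> carrier G"
    using ec m n r r' by auto
  have "e \<otimes> (m \<otimes> n) \<otimes> (e \<otimes> (r' \<otimes> r)) = (e \<otimes> (m \<otimes> n) \<otimes> e) \<otimes> (r' \<otimes> r)"
    using c by (simp add: m_assoc)
  also have "\<dots> = ((e \<otimes> m \<otimes> e) \<otimes> (e \<otimes> n \<otimes> e)) \<otimes> (r' \<otimes> r)" using H3[OF e m n gm gn] by simp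
  also have "\<dots> = (e \<otimes> m \<otimes> e) \<otimes> (((e \<otimes> n \<otimes> e) \<otimes> r') \<otimes> r)" using c by (simp add: m_assoc)
  also have "\<dots> = (e \<otimes> m \<otimes> e) \<otimes> (e \<otimes> r)" using r'(4) by simp
  also have "\<dots> = (e \<otimes> m \<otimes> e) \<otimes> r" using r(2) by simp
  also have "\<dots> = e" using r(4) .
  finally show ?thesis unfolding good_def using ec r r' by (intro bexI[of _ "e \<otimes> (r' \<otimes> r)"]) auto
qed

lemma good_split:
  assumes e: "e \<in> idems G" and m: "m \<in> carrier G" and n: "n \<in> carrier G"
    and g: "good e (m \<otimes> n)"
  shows "good e m \<and> good e n"
proof
  have ec: "e \<in> carrier G" "e \<otimes> e = e" using idemsD[OF e] by auto
  obtain w where w: "w \<in> carrier G" "e = e \<otimes> (m \<otimes> n) \<otimes> w" using g unfolding good_def by blast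
  then have "e = e \<otimes> m \<otimes> (n \<otimes> w)" using ec m n by (simp add: m_assoc)
  then show "good e m" unfolding good_def using n w by blast
  obtain w' where w': "w' \<in> carrier G" "e = w' \<otimes> (m \<otimes> n) \<otimes> e"
    using unit_good(2)[OF e _ good_unit[OF e _ g]] m n by auto
  then have "e = (w' \<otimes> m) \<otimes> n \<otimes> e" using ec m n by (simp add: m_assoc)
  then have "unitL e (e \<otimes> n \<otimes> e)" using GL[OF e n, of "w' \<otimes> m"] w'(1) m by simp
  then show "good e n" using unit_good(1)[OF e n] by simp
qed

lemma good_pow:
  assumes e: "e \<in> idems G" and m: "m \<in> carrier G" and g: "good e m"
  shows "k \<ge> 1 \<Longrightarrow> good e (m [^] (k::nat))"
proof (induction k)
  case 0 then show ?case by simp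
next
  case (Suc k)
  show ?case
  proof (cases "k = 0")
    case True then show ?thesis using g m by simp
  next
    case False then show ?thesis using Suc good_mult[OF e _ m _ g] m by simp
  qed
qed

lemma G2:
  assumes e: "e \<in> idems G" and m: "m \<in> carrier G"
  shows "good e m \<longleftrightarrow> pideal G e \<subseteq> sigma G m"
proof -
  have ec: "e \<in> carrier G" "e \<otimes> e = e" using idemsD[OF e] by auto
  obtain N :: nat where N: "N \<ge> 1" "omega_pow G m = m [^] N" and Eid: "omega_pow G m \<in> idems G"
    using omega_prop[OF m] by blast
  define E where "E = omega_pow G m"
  have Ec: "E \<in> carrier G" "E \<otimes> E = E" using idemsD Eid E_def by auto
  show ?thesis
  proof
    assume g: "good e m"
    have "good e E" unfolding E_def N(2) using good_pow[OF e m g N(1)] .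
    then obtain r where r: "r \<in> carrier G" "(e \<otimes> E \<otimes> e) \<otimes> r = e"
      using good_unit[OF e Ec(1)] unfolding unitL_def by blast
    have "e = e \<otimes> E \<otimes> (e \<otimes> r)" using r ec Ec by (simp add: m_assoc)
    then have "e \<in> pideal G E" using pideal_mem[of E e "e \<otimes> r"] ec Ec r by simp
    then show "pideal G e \<subseteq> sigma G m" unfolding sigma_def E_def[symmetric] using pideal_sub Ec by simp
  next
    assume "pideal G e \<subseteq> sigma G m"
    then have "e \<in> pideal G E" unfolding sigma_def E_def[symmetric] using pideal_self ec by auto
    then obtain a b where ab: "a \<in> carrier G" "b \<in> carrier G" "e = a \<otimes> E \<otimes> b" unfolding pideal_def by blast
    have aEb: "a \<otimes> (E \<otimes> b) = e" using ab Ec by (simp add: m_assoc)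
    have aEb': "a \<otimes> (E \<otimes> (b \<otimes> z)) = e \<otimes> z" if "z \<in> carrier G" for z
      using aEb ab(1,2) Ec that by (metis m_assoc m_closed)
    define g where "g = E \<otimes> b \<otimes> e \<otimes> a \<otimes> E"
    have gc: "g \<in> carrier G" using g_def ab(1,2) Ec ec by simp
    have gg: "g \<otimes> g = g" unfolding g_def using ab(1,2) Ec ec by (simp add: m_assoc idem_tail aEb')
    have gid: "g \<in> idems G" using gc gg unfolding idems_def by simp
    have "g \<in> pideal G e" unfolding g_def using pideal_mem[of e "E \<otimes> b" "a \<otimes> E"] ab Ec ec by (simp add: m_assoc)
    then have s1: "pideal G g \<subseteq> pideal G e" using pideal_sub ec by simp
    have "a \<otimes> g \<otimes> b = e" unfolding g_def using ab(1,2) Ec ec by (simp add: m_assoc idem_tail aEb' aEb)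
    then have "e \<in> pideal G g" using pideal_mem[of g a b] gc ab(1,2) by simp
    then have s2: "pideal G e \<subseteq> pideal G g" using pideal_sub gc by simp
    have ge: "pideal G e = pideal G g" using s2 s1 by (rule antisym)
    have ege: "e \<otimes> g \<otimes> e = e" using L[OF e gid ge] .
    have Eg: "E \<otimes> g = g" unfolding g_def using ab(1,2) Ec ec by (simp add: m_assoc idem_tail)
    obtain N' where N': "N = Suc N'" using N(1) by (cases N) auto
    have "e = e \<otimes> (E \<otimes> g) \<otimes> e" using ege Eg by simp
    also have "\<dots> = e \<otimes> m \<otimes> (m [^] N' \<otimes> g \<otimes> e)"
      unfolding E_def N(2) N' using ec m gc nat_pow_Suc2[of m N'] by (simp add: m_assoc)
    finally show "good e m" unfolding good_def using m gc ec by blast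
  qed
qed


lemma lg_carrier:
  assumes e: "e \<in> idems G" and m: "m \<in> carrier G" and g: "good e m"
  shows "e \<otimes> m \<otimes> e \<in> carrier (local_group G e)"
proof -
  have ec: "e \<in> carrier G" "e \<otimes> e = e" using idemsD[OF e] by auto
  obtain r where r: "r \<in> carrier G" "e \<otimes> r = r" "r \<otimes> e = r" "(e \<otimes> m \<otimes> e) \<otimes> r = e" "r \<otimes> (e \<otimes> m \<otimes> e) = e"
    using good_unit[OF e m g] unfolding unitL_def by blast
  have "r = e \<otimes> r \<otimes> e" using r by simp
  then have "r \<in> {e \<otimes> x \<otimes> e | x. x \<in> carrier G}" using r(1) by blast
  moreover have "e \<otimes> m \<otimes> e \<in> {e \<otimes> x \<otimes> e | x. x \<in> carrier G}" using m by blast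
  ultimately show ?thesis unfolding local_group_def Let_def using r by auto
qed

lemma infl_eq:
  assumes e: "e \<in> idems G" and m: "m \<in> carrier G"
  shows "infl G e \<rho> n m = (if good e m then \<rho> (e \<otimes> m \<otimes> e) else 0\<^sub>m n n)"
  unfolding infl_def using G2[OF e m] by simp

lemma infl_carrier:
  assumes e: "e \<in> idems G" and rep: "is_rep (local_group G e) \<rho> n" and m: "m \<in> carrier G"
  shows "infl G e \<rho> n m \<in> carrier_mat n n"
  using infl_eq[OF e m, of \<rho> n] lg_carrier[OF e m] rep unfolding is_rep_def by (cases "good e m") auto

lemma infl_mult:
  assumes e: "e \<in> idems G" and rep: "is_rep (local_group G e) \<rho> n" and m: "m \<in> carrier G" and k: "k \<in> carrier G"
  shows "infl G e \<rho> n (m \<otimes> k) = infl G e \<rho> n m * infl G e \<rho> n k"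
proof (cases "good e m \<and> good e k")
  case True
  then have g: "good e (m \<otimes> k)" using good_mult[OF e m k] by simp
  have "\<rho> (e \<otimes> (m \<otimes> k) \<otimes> e) = \<rho> ((e \<otimes> m \<otimes> e) \<otimes>\<^bsub>local_group G e\<^esub> (e \<otimes> k \<otimes> e))"
    using H3[OF e m k] True unfolding local_group_def Let_def by simp
  also have "\<dots> = \<rho> (e \<otimes> m \<otimes> e) * \<rho> (e \<otimes> k \<otimes> e)"
    using rep lg_carrier[OF e m] lg_carrier[OF e k] True unfolding is_rep_def by blast
  finally show ?thesis using True g infl_eq[OF e m, of \<rho> n] infl_eq[OF e k, of \<rho> n] infl_eq[OF e m_closed[OF m k], of \<rho> n] by simp
next
  case False
  then have g: "\<not> good e (m \<otimes> k)" using good_split[OF e m k] by blast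
  have cm: "infl G e \<rho> n m \<in> carrier_mat n n" "infl G e \<rho> n k \<in> carrier_mat n n"
    using infl_carrier[OF e rep] m k by auto
  show ?thesis
  proof (cases "good e m")
    case True
    then have "\<not> good e k" using False by simp
    then show ?thesis using infl_eq[OF e m, of \<rho> n] infl_eq[OF e k, of \<rho> n] infl_eq[OF e m_closed[OF m k], of \<rho> n] g cm by simp
  next
    case False
    then show ?thesis using infl_eq[OF e m, of \<rho> n] infl_eq[OF e k, of \<rho> n] infl_eq[OF e m_closed[OF m k], of \<rho> n] g cm by simp
  qed
qed

lemma infl_one:
  assumes e: "e \<in> idems G" and rep: "is_rep (local_group G e) \<rho> n"
  shows "infl G e \<rho> n \<one> = 1\<^sub>m n"
proof -
  have ec: "e \<in> carrier G" "e \<otimes> e = e" using idemsD[OF e] by auto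
  have "good e \<one>" unfolding good_def using ec by (intro bexI[of _ e]) auto
  then have "infl G e \<rho> n \<one> = \<rho> e" using infl_eq[OF e one_closed] ec by simp
  also have "\<dots> = 1\<^sub>m n" using rep unfolding is_rep_def local_group_def Let_def by simp
  finally show ?thesis .
qed

lemma infl_idem:
  assumes e: "e \<in> idems G" and rep: "is_rep (local_group G e) \<rho> n" and f: "f \<in> idems G"
  shows "infl G e \<rho> n f = (if pideal G e \<subseteq> pideal G f then 1\<^sub>m n else 0\<^sub>m n n)"
proof -
  have ec: "e \<in> carrier G" "e \<otimes> e = e" using idemsD[OF e] by auto
  have fc: "f \<in> carrier G" "f \<otimes> f = f" using idemsD[OF f] by auto
  have sf: "sigma G f = pideal G f" unfolding sigma_def using omega_idem[OF f] by simp
  show ?thesis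
  proof (cases "pideal G e \<subseteq> pideal G f")
    case True
    then have g: "good e f" using G2[OF e fc(1)] sf by simp
    define x where "x = e \<otimes> f \<otimes> e"
    have xc: "x \<in> carrier G" using x_def ec fc by simp
    have xx: "x \<otimes> x = x" using H3[OF e fc(1) fc(1) g g] fc unfolding x_def by simp
    obtain r where r: "r \<in> carrier G" "x \<otimes> r = e"
      using good_unit[OF e fc(1) g] unfolding unitL_def x_def by blast
    have xe: "x \<otimes> e = x" unfolding x_def using ec fc by (simp add: m_assoc)
    have "x = x \<otimes> e" using xe by simp
    also have "\<dots> = x \<otimes> (x \<otimes> r)" using r by simp
    also have "\<dots> = (x \<otimes> x) \<otimes> r" using xc r by (simp add: m_assoc)
    also have "\<dots> = e" using xx r by simp
    finally have "x = e" .
    then have "infl G e \<rho> n f = \<rho> e" using infl_eq[OF e fc(1)] g unfolding x_def by simp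
    also have "\<dots> = 1\<^sub>m n" using rep unfolding is_rep_def local_group_def Let_def by simp
    finally show ?thesis using True by simp
  next
    case False
    then show ?thesis unfolding infl_def sf by simp
  qed
qed


end


lemma to_mat_inj:
  assumes "\<forall>i j. (i \<ge> t \<or> j \<ge> s) \<longrightarrow> d1 i j = 0" "\<forall>i j. (i \<ge> t \<or> j \<ge> s) \<longrightarrow> d2 i j = 0"
    and "to_mat t s d1 = to_mat t s d2"
  shows "d1 = d2"
proof (intro ext)
  fix i j
  show "d1 i j = d2 i j"
  proof (cases "i < t \<and> j < s")
    case True
    have "to_mat t s d1 $$ (i, j) = to_mat t s d2 $$ (i, j)" using assms(3) by simp
    then show ?thesis using True unfolding to_mat_def by simp
  next
    case False
    then have "i \<ge> t \<or> j \<ge> s" by auto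
    then show ?thesis using assms(1,2) by metis
  qed
qed

lemma vs_fscale: "vector_space (fscale :: 'k::field \<Rightarrow> ('x \<Rightarrow> nat \<Rightarrow> nat \<Rightarrow> 'k) \<Rightarrow> _)"
  by unfold_locales (simp_all add: fscale_def fun_eq_iff algebra_simps)

lemma dim_image_eq_gen:
  assumes lf: "Vector_Spaces.linear s1 s2 f" and fi: "inj_on f (module.span s1 S)"
  shows "vector_space.dim s2 (f ` S) = vector_space.dim s1 S"
proof -
  interpret lf: Vector_Spaces.linear s1 s2 f by fact
  obtain B where B: "B \<subseteq> S" "lf.vs1.independent B" "S \<subseteq> lf.vs1.span B" "card B = lf.vs1.dim S"
    using lf.vs1.basis_exists[of S] by auto
  then have "lf.vs1.span S = lf.vs1.span B"
    using lf.vs1.span_mono[of B S] lf.vs1.span_mono[of S "lf.vs1.span B"] lf.vs1.span_span[of B] by auto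
  moreover have "card (f ` B) = card B"
    using assms card_image[of f B] inj_on_subset[of f "lf.vs1.span S" B] B lf.vs1.span_superset by auto
  moreover have "(f ` B) \<subseteq> (f ` S)"
    using B by auto
  ultimately show ?thesis
    by (metis B(2) B(4) fi lf.dependent_inj_imageD lf.span_image lf.vs2.dim_eq_card_independent lf.vs2.dim_span)
qed

lemma cong_gen_cong:
  assumes mon: "monoid M" and P: "P \<subseteq> carrier M \<times> carrier M"
  shows "is_congruence M (cong_gen M P)"
proof -
  let ?F = "{R. is_congruence M R \<and> P \<subseteq> R}"
  have full: "carrier M \<times> carrier M \<in> ?F"
    using P monoid.m_closed[OF mon] unfolding is_congruence_def equiv_def refl_on_def sym_def trans_def by auto
  have E: "equiv (carrier M) R" if "R \<in> ?F" for R using that unfolding is_congruence_def by auto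
  have sub: "\<Inter>?F \<subseteq> carrier M \<times> carrier M" using full by blast
  have "equiv (carrier M) (\<Inter>?F)"
    unfolding equiv_def refl_on_def sym_def trans_def
  proof (intro conjI)
    show "\<Inter>?F \<subseteq> carrier M \<times> carrier M" by (rule sub)
    show "\<forall>x\<in>carrier M. (x, x) \<in> \<Inter>?F" using E unfolding equiv_def refl_on_def by blast
    show "\<forall>x y. (x, y) \<in> \<Inter>?F \<longrightarrow> (y, x) \<in> \<Inter>?F" using E unfolding equiv_def sym_def by blast
    show "\<forall>x y z. (x, y) \<in> \<Inter>?F \<longrightarrow> (y, z) \<in> \<Inter>?F \<longrightarrow> (x, z) \<in> \<Inter>?F"
      using E unfolding equiv_def trans_def by blast
  qed
  moreover have "\<forall>a b c d. (a, b) \<in> \<Inter>?F \<and> (c, d) \<in> \<Inter>?F \<longrightarrow> (a \<otimes>\<^bsub>M\<^esub> c, b \<otimes>\<^bsub>M\<^esub> d) \<in> \<Inter>?F"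
    unfolding is_congruence_def by blast
  ultimately show ?thesis unfolding is_congruence_def cong_gen_def by blast
qed

lemma cong_gen_min:
  assumes "is_congruence M R" "P \<subseteq> R"
  shows "cong_gen M P \<subseteq> R"
  using assms unfolding cong_gen_def by blast

lemma quot_ext1:
  fixes M :: "('a, 'b) monoid_scheme" and S T :: "'a \<Rightarrow> 'k::field mat" and P :: "('a \<times> 'a) set"
  assumes mon: "monoid M"
    and Sc: "\<forall>x\<in>carrier M. S x \<in> carrier_mat s s" and Tc: "\<forall>x\<in>carrier M. T x \<in> carrier_mat t t"
    and Sm: "\<forall>x\<in>carrier M. \<forall>y\<in>carrier M. S (x \<otimes>\<^bsub>M\<^esub> y) = S x * S y"
    and Tm: "\<forall>x\<in>carrier M. \<forall>y\<in>carrier M. T (x \<otimes>\<^bsub>M\<^esub> y) = T x * T y"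
    and P: "P \<subseteq> carrier M \<times> carrier M"
    and PR: "\<forall>(a, b)\<in>P. S a = S b \<and> T a = T b \<and> (\<forall>d\<in>cocycles M S s T t. d a = d b)"
  shows "ext1_dim M S s T t =
     ext1_dim (quot_monoid M (cong_gen M P)) (\<lambda>A. S (SOME m. m \<in> A)) s (\<lambda>A. T (SOME m. m \<in> A)) t"
proof -
  define C where "C = cong_gen M P"
  have congC: "is_congruence M C" unfolding C_def by (rule cong_gen_cong[OF mon P])
  have eqC: "equiv (carrier M) C" using congC unfolding is_congruence_def by simp
  have compC: "(a \<otimes>\<^bsub>M\<^esub> c, b \<otimes>\<^bsub>M\<^esub> d) \<in> C" if "(a, b) \<in> C" "(c, d) \<in> C" for a b c d
    using congC that unfolding is_congruence_def by blast
  have Ccar: "C \<subseteq> carrier M \<times> carrier M" using eqC unfolding equiv_def refl_on_def by blast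
  define coc where "coc = cocycles M S s T t"
  define R where "R = {(x, y). x \<in> carrier M \<and> y \<in> carrier M \<and> S x = S y \<and> T x = T y \<and> (\<forall>d\<in>coc. d x = d y)}"
  have cocD: "d x = 0" "d x i j = 0" if "d \<in> coc" "x \<notin> carrier M" for d x i j
    using that unfolding coc_def cocycles_def by auto
  have cocR: "\<forall>i j. (i \<ge> t \<or> j \<ge> s) \<longrightarrow> d x i j = 0" if "d \<in> coc" for d x
    using that unfolding coc_def cocycles_def by auto
  have cocE: "to_mat t s (d (x \<otimes>\<^bsub>M\<^esub> y)) = T x * to_mat t s (d y) + to_mat t s (d x) * S y"
    if "d \<in> coc" "x \<in> carrier M" "y \<in> carrier M" for d x y
    using that unfolding coc_def cocycles_def by auto
  have congR: "is_congruence M R"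
    unfolding is_congruence_def
  proof (intro conjI allI impI)
    show "equiv (carrier M) R" unfolding equiv_def refl_on_def sym_def trans_def R_def by auto
  next
    fix a b c d assume "(a, b) \<in> R \<and> (c, d) \<in> R"
    then have ab: "a \<in> carrier M" "b \<in> carrier M" "S a = S b" "T a = T b" "\<forall>D\<in>coc. D a = D b"
      and cd: "c \<in> carrier M" "d \<in> carrier M" "S c = S d" "T c = T d" "\<forall>D\<in>coc. D c = D d"
      unfolding R_def by auto
    have "\<forall>D\<in>coc. D (a \<otimes>\<^bsub>M\<^esub> c) = D (b \<otimes>\<^bsub>M\<^esub> d)"
    proof
      fix D assume D: "D \<in> coc"
      have "to_mat t s (D (a \<otimes>\<^bsub>M\<^esub> c)) = to_mat t s (D (b \<otimes>\<^bsub>M\<^esub> d))"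
        using cocE[OF D ab(1) cd(1)] cocE[OF D ab(2) cd(2)] ab cd D by simp
      then show "D (a \<otimes>\<^bsub>M\<^esub> c) = D (b \<otimes>\<^bsub>M\<^esub> d)" using to_mat_inj cocR[OF D] by blast
    qed
    then show "(a \<otimes>\<^bsub>M\<^esub> c, b \<otimes>\<^bsub>M\<^esub> d) \<in> R"
      unfolding R_def using ab cd Sm Tm monoid.m_closed[OF mon] by auto
  qed
  have PsubR: "P \<subseteq> R" using P PR unfolding R_def coc_def by auto
  have CR: "C \<subseteq> R" unfolding C_def by (rule cong_gen_min[OF congR PsubR])
  define Q where "Q = quot_monoid M C"
  define S' where "S' = (\<lambda>A. S (SOME m. m \<in> A))"
  define T' where "T' = (\<lambda>A. T (SOME m. m \<in> A))"
  have cQ: "carrier Q = carrier M // C" unfolding Q_def quot_monoid_def by simp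
  have mQ: "A \<otimes>\<^bsub>Q\<^esub> B = C `` {(SOME a. a \<in> A) \<otimes>\<^bsub>M\<^esub> (SOME b. b \<in> B)}" for A B
    unfolding Q_def quot_monoid_def by simp
  have K1: "(x, SOME m. m \<in> C `` {x}) \<in> C" if "x \<in> carrier M" for x
  proof -
    have "x \<in> C `` {x}" using eqC that unfolding equiv_def refl_on_def by blast
    then have "(SOME m. m \<in> C `` {x}) \<in> C `` {x}" by (rule someI)
    then show ?thesis by simp
  qed
  have K2: "C `` {x} \<otimes>\<^bsub>Q\<^esub> C `` {y} = C `` {x \<otimes>\<^bsub>M\<^esub> y}" if "x \<in> carrier M" "y \<in> carrier M" for x y
  proof -
    have "(x \<otimes>\<^bsub>M\<^esub> y, (SOME m. m \<in> C `` {x}) \<otimes>\<^bsub>M\<^esub> (SOME m. m \<in> C `` {y})) \<in> C"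
      using compC K1 that by blast
    then have "C `` {(SOME m. m \<in> C `` {x}) \<otimes>\<^bsub>M\<^esub> (SOME m. m \<in> C `` {y})} = C `` {x \<otimes>\<^bsub>M\<^esub> y}"
      using equiv_class_eq[OF eqC] by (metis eqC equiv_class_eq_iff)
    then show ?thesis using mQ by simp
  qed
  have K4: "S' (C `` {x}) = S x" "T' (C `` {x}) = T x" "\<forall>d\<in>coc. d (SOME m. m \<in> C `` {x}) = d x"
    if "x \<in> carrier M" for x
    using K1[OF that] CR unfolding R_def S'_def T'_def by auto
  have inQ: "C `` {x} \<in> carrier Q" if "x \<in> carrier M" for x using that cQ by (simp add: quotientI)
  have fromQ: "\<exists>x\<in>carrier M. A = C `` {x}" if "A \<in> carrier Q" for A
    using that cQ by (auto elim: quotientE)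
  define \<Phi> :: "('a set \<Rightarrow> nat \<Rightarrow> nat \<Rightarrow> 'k) \<Rightarrow> ('a \<Rightarrow> nat \<Rightarrow> nat \<Rightarrow> 'k)"
    where "\<Phi> d' = (\<lambda>x. if x \<in> carrier M then d' (C `` {x}) else 0)" for d'
  define W where "W = {d' :: 'a set \<Rightarrow> nat \<Rightarrow> nat \<Rightarrow> 'k. \<forall>A. A \<notin> carrier Q \<longrightarrow> d' A = 0}"
  interpret V1: vector_space "fscale :: 'k \<Rightarrow> ('a set \<Rightarrow> nat \<Rightarrow> nat \<Rightarrow> 'k) \<Rightarrow> _" by (rule vs_fscale)
  interpret V2: vector_space "fscale :: 'k \<Rightarrow> ('a \<Rightarrow> nat \<Rightarrow> nat \<Rightarrow> 'k) \<Rightarrow> _" by (rule vs_fscale)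
  have lin: "Vector_Spaces.linear fscale fscale \<Phi>"
    unfolding Vector_Spaces.linear_iff
  proof (intro conjI allI)
    show "vector_space (fscale :: 'k \<Rightarrow> ('a set \<Rightarrow> nat \<Rightarrow> nat \<Rightarrow> 'k) \<Rightarrow> _)" by (rule vs_fscale)
    show "vector_space (fscale :: 'k \<Rightarrow> ('a \<Rightarrow> nat \<Rightarrow> nat \<Rightarrow> 'k) \<Rightarrow> _)" by (rule vs_fscale)
    show "\<Phi> (x + y) = \<Phi> x + \<Phi> y" for x y unfolding \<Phi>_def by (auto simp: fun_eq_iff)
    show "\<Phi> (fscale c x) = fscale c (\<Phi> x)" for c x unfolding \<Phi>_def fscale_def by (auto simp: fun_eq_iff)
  qed
  have subW: "V1.subspace W" unfolding V1.subspace_def W_def fscale_def by (auto simp: fun_eq_iff)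
  have injW: "inj_on \<Phi> W"
  proof (rule inj_onI)
    fix d1 d2 assume d1: "d1 \<in> W" and d2: "d2 \<in> W" and eq: "\<Phi> d1 = \<Phi> d2"
    show "d1 = d2"
    proof
      fix A show "d1 A = d2 A"
      proof (cases "A \<in> carrier Q")
        case True
        then obtain x where x: "x \<in> carrier M" "A = C `` {x}" using fromQ by blast
        have "\<Phi> d1 x = \<Phi> d2 x" using eq by simp
        then show ?thesis using x unfolding \<Phi>_def by simp
      next
        case False then show ?thesis using d1 d2 unfolding W_def by simp
      qed
    qed
  qed
  define cocQ where "cocQ = cocycles Q S' s T' t"
  define cobQ where "cobQ = coboundaries Q S' s T' t"
  define cob where "cob = coboundaries M S s T t"
  have cocQW: "cocQ \<subseteq> W" unfolding cocQ_def cocycles_def W_def by auto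
  have cobQW: "cobQ \<subseteq> W" unfolding cobQ_def coboundaries_def W_def by auto
  have spanW: "V1.span X \<subseteq> W" if "X \<subseteq> W" for X using V1.span_minimal[OF that subW] .
  have imcoc: "\<Phi> ` cocQ = coc"
  proof
    show "\<Phi> ` cocQ \<subseteq> coc"
    proof
      fix D assume "D \<in> \<Phi> ` cocQ"
      then obtain d' where d': "d' \<in> cocQ" "D = \<Phi> d'" by blast
      have z: "\<forall>A. A \<notin> carrier Q \<longrightarrow> d' A = 0" "\<forall>A i j. (i \<ge> t \<or> j \<ge> s) \<longrightarrow> d' A i j = 0"
        "\<forall>A\<in>carrier Q. \<forall>B\<in>carrier Q. to_mat t s (d' (A \<otimes>\<^bsub>Q\<^esub> B)) = T' A * to_mat t s (d' B) + to_mat t s (d' A) * S' B"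
        using d'(1) unfolding cocQ_def cocycles_def by auto
      have "to_mat t s (D (x \<otimes>\<^bsub>M\<^esub> y)) = T x * to_mat t s (D y) + to_mat t s (D x) * S y"
        if "x \<in> carrier M" "y \<in> carrier M" for x y
      proof -
        have "D (x \<otimes>\<^bsub>M\<^esub> y) = d' (C `` {x} \<otimes>\<^bsub>Q\<^esub> C `` {y})"
          using d'(2) K2 that monoid.m_closed[OF mon] unfolding \<Phi>_def by simp
        then show ?thesis using z(3) inQ that K4 d'(2) unfolding \<Phi>_def by simp
      qed
      then show "D \<in> coc" unfolding coc_def cocycles_def using z d'(2) unfolding \<Phi>_def by auto
    qed
  next
    show "coc \<subseteq> \<Phi> ` cocQ"
    proof
      fix d assume d: "d \<in> coc"
      define d' where "d' = (\<lambda>A. if A \<in> carrier Q then d (SOME m. m \<in> A) else 0)"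
      have "\<Phi> d' = d"
      proof
        fix x show "\<Phi> d' x = d x"
          using K4(3)[of x] d inQ cocD[OF d, of x] unfolding \<Phi>_def d'_def by auto
      qed
      moreover have "d' \<in> cocQ"
      proof -
        have "to_mat t s (d' (A \<otimes>\<^bsub>Q\<^esub> B)) = T' A * to_mat t s (d' B) + to_mat t s (d' A) * S' B"
          if AQ: "A \<in> carrier Q" and BQ: "B \<in> carrier Q" for A B
        proof -
          obtain a where a: "a \<in> carrier M" "A = C `` {a}" using fromQ[OF AQ] by blast
          obtain b where b: "b \<in> carrier M" "B = C `` {b}" using fromQ[OF BQ] by blast
          have ab: "a \<otimes>\<^bsub>M\<^esub> b \<in> carrier M" using a b monoid.m_closed[OF mon] by simp
          have "d' (A \<otimes>\<^bsub>Q\<^esub> B) = d (a \<otimes>\<^bsub>M\<^esub> b)" using K2 a b ab inQ K4(3) d unfolding d'_def by simp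
          moreover have "d' A = d a" "d' B = d b" using a b inQ K4(3) d unfolding d'_def by auto
          ultimately show ?thesis using cocE[OF d a(1) b(1)] K4 a b by simp
        qed
        moreover have "\<forall>A i j. (i \<ge> t \<or> j \<ge> s) \<longrightarrow> d' A i j = 0" using cocR[OF d] unfolding d'_def by simp
        ultimately show ?thesis unfolding cocQ_def cocycles_def d'_def by auto
      qed
      ultimately show "d \<in> \<Phi> ` cocQ" by blast
    qed
  qed
  have imcob: "\<Phi> ` cobQ = cob"
  proof
    show "\<Phi> ` cobQ \<subseteq> cob"
    proof
      fix D assume "D \<in> \<Phi> ` cobQ"
      then obtain d' where d': "d' \<in> cobQ" "D = \<Phi> d'" by blast
      then obtain B where B: "B \<in> carrier_mat t s" "\<forall>A. d' A = (if A \<in> carrier Q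
            then (\<lambda>i j. if i < t \<and> j < s then (T' A * B - B * S' A) $$ (i, j) else 0) else 0)"
        unfolding cobQ_def coboundaries_def by blast
      have "\<forall>x. D x = (if x \<in> carrier M
            then (\<lambda>i j. if i < t \<and> j < s then (T x * B - B * S x) $$ (i, j) else 0) else 0)"
      proof
        fix x show "D x = (if x \<in> carrier M
            then (\<lambda>i j. if i < t \<and> j < s then (T x * B - B * S x) $$ (i, j) else 0) else 0)"
        proof (cases "x \<in> carrier M")
          case True
          have "D x = d' (C `` {x})" using d'(2) True unfolding \<Phi>_def by simp
          also have "\<dots> = (\<lambda>i j. if i < t \<and> j < s then (T' (C `` {x}) * B - B * S' (C `` {x})) $$ (i, j) else 0)"
            using B(2) inQ[OF True] by simp
          finally have Dx: "D x = (\<lambda>i j. if i < t \<and> j < s then (T' (C `` {x}) * B - B * S' (C `` {x})) $$ (i, j) else 0)" .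
          have eq: "T' (C `` {x}) * B - B * S' (C `` {x}) = T x * B - B * S x" using K4(1,2)[OF True] by metis
          show ?thesis using Dx True unfolding eq by simp
        next
          case False then show ?thesis using d'(2) unfolding \<Phi>_def by simp
        qed
      qed
      then show "D \<in> cob" unfolding cob_def coboundaries_def using B(1) by blast
    qed
  next
    show "cob \<subseteq> \<Phi> ` cobQ"
    proof
      fix d assume "d \<in> cob"
      then obtain B where B: "B \<in> carrier_mat t s" "\<forall>x. d x = (if x \<in> carrier M
            then (\<lambda>i j. if i < t \<and> j < s then (T x * B - B * S x) $$ (i, j) else 0) else 0)"
        unfolding cob_def coboundaries_def by blast
      define d' where "d' = (\<lambda>A. if A \<in> carrier Q
            then (\<lambda>i j. if i < t \<and> j < s then (T' A * B - B * S' A) $$ (i, j) else 0) else 0)"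
      have "d' \<in> cobQ" unfolding cobQ_def coboundaries_def d'_def using B(1) by blast
      moreover have "\<Phi> d' = d"
      proof
        fix x show "\<Phi> d' x = d x"
        proof (cases "x \<in> carrier M")
          case True
          have "\<Phi> d' x = (\<lambda>i j. if i < t \<and> j < s then (T' (C `` {x}) * B - B * S' (C `` {x})) $$ (i, j) else 0)"
            using inQ[OF True] True unfolding \<Phi>_def d'_def by simp
          moreover have eq: "T' (C `` {x}) * B - B * S' (C `` {x}) = T x * B - B * S x" using K4(1,2)[OF True] by metis
          ultimately show ?thesis using True B(2) unfolding eq by simp
        next
          case False then show ?thesis using B(2) unfolding \<Phi>_def by simp
        qed
      qed
      ultimately show "d \<in> \<Phi> ` cobQ" by blast
    qed
  qed
  have "V2.dim coc = V1.dim cocQ"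
    using dim_image_eq_gen[OF lin inj_on_subset[OF injW spanW[OF cocQW]]] imcoc by simp
  moreover have "V2.dim cob = V1.dim cobQ"
    using dim_image_eq_gen[OF lin inj_on_subset[OF injW spanW[OF cobQW]]] imcob by simp
  ultimately show ?thesis
    unfolding ext1_dim_def coc_def cob_def cocQ_def cobQ_def Q_def C_def S'_def T'_def by simp
qed



lemma mat_double_zero:
  fixes X :: "'a::field mat"
  assumes X: "X \<in> carrier_mat t s" and eq: "X = X + X"
  shows "X = 0\<^sub>m t s"
proof (rule eq_matI)
  fix i j assume ij: "i < dim_row (0\<^sub>m t s)" "j < dim_col (0\<^sub>m t s)"
  have "X $$ (i, j) = (X + X) $$ (i, j)" using eq by simp
  also have "\<dots> = X $$ (i, j) + X $$ (i, j)" using ij X by simp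
  finally have "X $$ (i, j) = X $$ (i, j) + X $$ (i, j)" .
  then have "X $$ (i, j) = 0" by (metis add.right_neutral add_left_cancel)
  then show "X $$ (i, j) = 0\<^sub>m t s $$ (i, j)" using ij by simp
qed (use X in auto)

lemma to_mat_carrier: "to_mat t s f \<in> carrier_mat t s"
  unfolding to_mat_def by simp

context rmon begin

lemma zpair_idems:
  assumes "(a, b) \<in> right_zero_pairs G \<or> (a, b) \<in> left_zero_pairs G"
  shows "a \<in> idems G" "b \<in> idems G" "pideal G a = pideal G b"
proof -
  have c: "a \<in> carrier G" "b \<in> carrier G" and
    h: "(a \<otimes> b = b \<and> b \<otimes> a = a) \<or> (a \<otimes> b = a \<and> b \<otimes> a = b)"
    using assms unfolding right_zero_pairs_def left_zero_pairs_def by auto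
  have aa: "a \<otimes> a = a" and bb: "b \<otimes> b = b"
  proof -
    have "a \<otimes> a = a \<and> b \<otimes> b = b" using h
    proof
      assume h1: "a \<otimes> b = b \<and> b \<otimes> a = a"
      have "a \<otimes> a = a \<otimes> (b \<otimes> a)" using h1 by simp
      also have "\<dots> = (a \<otimes> b) \<otimes> a" using c by (simp add: m_assoc)
      also have "\<dots> = a" using h1 by simp
      finally have 1: "a \<otimes> a = a" .
      have "b \<otimes> b = b \<otimes> (a \<otimes> b)" using h1 by simp
      also have "\<dots> = (b \<otimes> a) \<otimes> b" using c by (simp add: m_assoc)
      also have "\<dots> = b" using h1 by simp
      finally show ?thesis using 1 by simp
    next
      assume h1: "a \<otimes> b = a \<and> b \<otimes> a = b"
      have "a \<otimes> a = (a \<otimes> b) \<otimes> a" using h1 by simp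
      also have "\<dots> = a \<otimes> (b \<otimes> a)" using c by (simp add: m_assoc)
      also have "\<dots> = a" using h1 by simp
      finally have 1: "a \<otimes> a = a" .
      have "b \<otimes> b = (b \<otimes> a) \<otimes> b" using h1 by simp
      also have "\<dots> = b \<otimes> (a \<otimes> b)" using c by (simp add: m_assoc)
      also have "\<dots> = b" using h1 by simp
      finally show ?thesis using 1 by simp
    qed
    then show "a \<otimes> a = a" "b \<otimes> b = b" by auto
  qed
  show ai: "a \<in> idems G" "b \<in> idems G" using c aa bb unfolding idems_def by auto
  have "a \<in> pideal G b \<and> b \<in> pideal G a"
    using h pideal_mem[of b a \<one>] pideal_mem[of b \<one> a] pideal_mem[of a b \<one>] pideal_mem[of a \<one> b] c by auto
  then show "pideal G a = pideal G b" using pideal_sub c by blast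
qed

lemma zpair_infl:
  assumes e: "e \<in> idems G" and rep: "is_rep (local_group G e) \<rho> n"
    and p: "(a, b) \<in> right_zero_pairs G \<or> (a, b) \<in> left_zero_pairs G"
  shows "infl G e \<rho> n a = infl G e \<rho> n b"
  using infl_idem[OF e rep zpair_idems(1)[OF p]] infl_idem[OF e rep zpair_idems(2)[OF p]] zpair_idems(3)[OF p]
  by simp

lemma zpair_cocycle:
  assumes e1: "e1 \<in> idems G" and e2: "e2 \<in> idems G" and le: "pideal G e1 \<subseteq> pideal G e2"
    and rep1: "is_rep (local_group G e1) \<rho>1 n1" and rep2: "is_rep (local_group G e2) \<rho>2 n2"
  shows "(a, b) \<in> right_zero_pairs G \<Longrightarrow> d \<in> cocycles G (infl G e1 \<rho>1 n1) n1 (infl G e2 \<rho>2 n2) n2 \<Longrightarrow> d a = d b"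
    and "(a, b) \<in> left_zero_pairs G \<Longrightarrow> d \<in> cocycles G (infl G e2 \<rho>2 n2) n2 (infl G e1 \<rho>1 n1) n1 \<Longrightarrow> d a = d b"
proof -
  assume p: "(a, b) \<in> right_zero_pairs G" and d: "d \<in> cocycles G (infl G e1 \<rho>1 n1) n1 (infl G e2 \<rho>2 n2) n2"
  have pp: "(a, b) \<in> right_zero_pairs G \<or> (a, b) \<in> left_zero_pairs G" using p by simp
  have ab: "a \<in> carrier G" "b \<in> carrier G" "a \<otimes> b = b" "b \<otimes> a = a" using p unfolding right_zero_pairs_def by auto
  have ai: "a \<in> idems G" "b \<in> idems G" "pideal G a = pideal G b" using zpair_idems[OF pp] by auto
  have aa: "a \<otimes> a = a" "b \<otimes> b = b" using ai idemsD by auto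
  define \<sigma> where "\<sigma> = infl G e1 \<rho>1 n1 a"
  define \<tau> where "\<tau> = infl G e2 \<rho>2 n2 a"
  have sb: "infl G e1 \<rho>1 n1 b = \<sigma>" "infl G e2 \<rho>2 n2 b = \<tau>"
    using zpair_infl[OF e1 rep1 pp] zpair_infl[OF e2 rep2 pp] \<sigma>_def \<tau>_def by auto
  have sv: "\<sigma> = (if pideal G e1 \<subseteq> pideal G a then 1\<^sub>m n1 else 0\<^sub>m n1 n1)"
    using infl_idem[OF e1 rep1 ai(1)] \<sigma>_def by simp
  have tv: "\<tau> = (if pideal G e2 \<subseteq> pideal G a then 1\<^sub>m n2 else 0\<^sub>m n2 n2)"
    using infl_idem[OF e2 rep2 ai(1)] \<tau>_def by simp
  define A where "A = to_mat n2 n1 (d a)"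
  define B where "B = to_mat n2 n1 (d b)"
  have AB: "A \<in> carrier_mat n2 n1" "B \<in> carrier_mat n2 n1" unfolding A_def B_def by (simp_all add: to_mat_carrier)
  have E: "to_mat n2 n1 (d (x \<otimes> y)) = infl G e2 \<rho>2 n2 x * to_mat n2 n1 (d y) + to_mat n2 n1 (d x) * infl G e1 \<rho>1 n1 y"
    if "x \<in> carrier G" "y \<in> carrier G" for x y using d that unfolding cocycles_def by auto
  have e_ab: "B = \<tau> * B + A * \<sigma>" using E[OF ab(1) ab(2)] ab(3) sb unfolding A_def B_def \<sigma>_def \<tau>_def by simp
  have e_aa: "A = \<tau> * A + A * \<sigma>" using E[OF ab(1) ab(1)] aa unfolding A_def \<sigma>_def \<tau>_def by simp
  have e_bb: "B = \<tau> * B + B * \<sigma>" using E[OF ab(2) ab(2)] aa sb unfolding B_def \<sigma>_def \<tau>_def by simp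
  have "A = B"
  proof (cases "pideal G e1 \<subseteq> pideal G a")
    case True
    then have s1: "\<sigma> = 1\<^sub>m n1" using sv by simp
    show ?thesis
    proof (cases "pideal G e2 \<subseteq> pideal G a")
      case True
      then have "\<tau> = 1\<^sub>m n2" using tv by simp
      then have "A = A + A" "B = B + B" using e_aa e_bb s1 AB by auto
      then show ?thesis using mat_double_zero AB by metis
    next
      case False
      then have "\<tau> = 0\<^sub>m n2 n2" using tv by simp
      then show ?thesis using e_ab s1 AB by simp
    qed
  next
    case False
    then have s0: "\<sigma> = 0\<^sub>m n1 n1" using sv by simp
    have "\<not> pideal G e2 \<subseteq> pideal G a" using False le by blast
    then have t0: "\<tau> = 0\<^sub>m n2 n2" using tv by simp
    have "A = 0\<^sub>m n2 n1" "B = 0\<^sub>m n2 n1" using e_aa e_bb s0 t0 AB by auto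
    then show ?thesis by simp
  qed
  then show "d a = d b" using to_mat_inj d unfolding A_def B_def cocycles_def by blast
next
  assume p: "(a, b) \<in> left_zero_pairs G" and d: "d \<in> cocycles G (infl G e2 \<rho>2 n2) n2 (infl G e1 \<rho>1 n1) n1"
  have pp: "(a, b) \<in> right_zero_pairs G \<or> (a, b) \<in> left_zero_pairs G" using p by simp
  have ab: "a \<in> carrier G" "b \<in> carrier G" "a \<otimes> b = a" "b \<otimes> a = b" using p unfolding left_zero_pairs_def by auto
  have ai: "a \<in> idems G" "b \<in> idems G" "pideal G a = pideal G b" using zpair_idems[OF pp] by auto
  have aa: "a \<otimes> a = a" "b \<otimes> b = b" using ai idemsD by auto
  define \<sigma> where "\<sigma> = infl G e2 \<rho>2 n2 a"
  define \<tau> where "\<tau> = infl G e1 \<rho>1 n1 a"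
  have sb: "infl G e2 \<rho>2 n2 b = \<sigma>" "infl G e1 \<rho>1 n1 b = \<tau>"
    using zpair_infl[OF e1 rep1 pp] zpair_infl[OF e2 rep2 pp] \<sigma>_def \<tau>_def by auto
  have sv: "\<sigma> = (if pideal G e2 \<subseteq> pideal G a then 1\<^sub>m n2 else 0\<^sub>m n2 n2)"
    using infl_idem[OF e2 rep2 ai(1)] \<sigma>_def by simp
  have tv: "\<tau> = (if pideal G e1 \<subseteq> pideal G a then 1\<^sub>m n1 else 0\<^sub>m n1 n1)"
    using infl_idem[OF e1 rep1 ai(1)] \<tau>_def by simp
  define A where "A = to_mat n1 n2 (d a)"
  define B where "B = to_mat n1 n2 (d b)"
  have AB: "A \<in> carrier_mat n1 n2" "B \<in> carrier_mat n1 n2" unfolding A_def B_def by (simp_all add: to_mat_carrier)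
  have E: "to_mat n1 n2 (d (x \<otimes> y)) = infl G e1 \<rho>1 n1 x * to_mat n1 n2 (d y) + to_mat n1 n2 (d x) * infl G e2 \<rho>2 n2 y"
    if "x \<in> carrier G" "y \<in> carrier G" for x y using d that unfolding cocycles_def by auto
  have e_ab: "A = \<tau> * B + A * \<sigma>" using E[OF ab(1) ab(2)] ab(3) sb unfolding A_def B_def \<sigma>_def \<tau>_def by simp
  have e_aa: "A = \<tau> * A + A * \<sigma>" using E[OF ab(1) ab(1)] aa unfolding A_def \<sigma>_def \<tau>_def by simp
  have e_bb: "B = \<tau> * B + B * \<sigma>" using E[OF ab(2) ab(2)] aa sb unfolding B_def \<sigma>_def \<tau>_def by simp
  have "A = B"
  proof (cases "pideal G e1 \<subseteq> pideal G a")
    case True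
    then have t1: "\<tau> = 1\<^sub>m n1" using tv by simp
    show ?thesis
    proof (cases "pideal G e2 \<subseteq> pideal G a")
      case True
      then have "\<sigma> = 1\<^sub>m n2" using sv by simp
      then have "A = A + A" "B = B + B" using e_aa e_bb t1 AB by auto
      then show ?thesis using mat_double_zero AB by metis
    next
      case False
      then have "\<sigma> = 0\<^sub>m n2 n2" using sv by simp
      then show ?thesis using e_ab t1 AB by simp
    qed
  next
    case False
    then have t0: "\<tau> = 0\<^sub>m n1 n1" using tv by simp
    have "\<not> pideal G e2 \<subseteq> pideal G a" using False le by blast
    then have s0: "\<sigma> = 0\<^sub>m n2 n2" using sv by simp
    have "A = 0\<^sub>m n1 n2" "B = 0\<^sub>m n1 n2" using e_aa e_bb s0 t0 AB by auto
    then show ?thesis by simp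
  qed
  then show "d a = d b" using to_mat_inj d unfolding A_def B_def cocycles_def by blast
qed

end



theorem mainTheorem12:
  fixes M :: "'a monoid" and eX eY :: 'a
    and \<rho>U :: "'a \<Rightarrow> 'k::field mat" and \<rho>V :: "'a \<Rightarrow> 'k mat" and nU nV :: nat
  assumes "monoid M" and "finite (carrier M)" and "rectangular M"
    and "splits TYPE('k) M"
    and "eX \<in> idems M" and "eY \<in> idems M"
    and "pideal M eX \<subseteq> pideal M eY"
    and "simple_rep (local_group M eX) \<rho>U nU"
    and "simple_rep (local_group M eY) \<rho>V nV"
  shows "ext1_dim M (infl M eX \<rho>U nU) nU (infl M eY \<rho>V nV) nV
           = ext1_dim (M_l M) (infl_quot M eX \<rho>U nU) nU (infl_quot M eY \<rho>V nV) nV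
       \<and> ext1_dim M (infl M eY \<rho>V nV) nV (infl M eX \<rho>U nU) nU
           = ext1_dim (M_r M) (infl_quot M eY \<rho>V nV) nV (infl_quot M eX \<rho>U nU) nU"
proof -
  have rm: "rmon M" using assms(1-3) unfolding rmon_def rmon_axioms_def by simp
  interpret R: rmon M by (rule rm)
  have repU: "is_rep (local_group M eX) \<rho>U nU" using assms(8) unfolding simple_rep_def by simp
  have repV: "is_rep (local_group M eY) \<rho>V nV" using assms(9) unfolding simple_rep_def by simp
  have Uc: "\<forall>x\<in>carrier M. infl M eX \<rho>U nU x \<in> carrier_mat nU nU" using R.infl_carrier[OF assms(5) repU] by simp
  have Vc: "\<forall>x\<in>carrier M. infl M eY \<rho>V nV x \<in> carrier_mat nV nV" using R.infl_carrier[OF assms(6) repV] by simp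
  have Um: "\<forall>x\<in>carrier M. \<forall>y\<in>carrier M. infl M eX \<rho>U nU (x \<otimes>\<^bsub>M\<^esub> y) = infl M eX \<rho>U nU x * infl M eX \<rho>U nU y"
    using R.infl_mult[OF assms(5) repU] by simp
  have Vm: "\<forall>x\<in>carrier M. \<forall>y\<in>carrier M. infl M eY \<rho>V nV (x \<otimes>\<^bsub>M\<^esub> y) = infl M eY \<rho>V nV x * infl M eY \<rho>V nV y"
    using R.infl_mult[OF assms(6) repV] by simp
  have qU: "infl_quot M eX \<rho>U nU = (\<lambda>A. infl M eX \<rho>U nU (SOME m. m \<in> A))" by (rule ext) (simp add: infl_quot_def)
  have qV: "infl_quot M eY \<rho>V nV = (\<lambda>A. infl M eY \<rho>V nV (SOME m. m \<in> A))" by (rule ext) (simp add: infl_quot_def)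
  have Pr: "right_zero_pairs M \<subseteq> carrier M \<times> carrier M" unfolding right_zero_pairs_def by auto
  have Pl: "left_zero_pairs M \<subseteq> carrier M \<times> carrier M" unfolding left_zero_pairs_def by auto
  have PRr: "\<forall>(a, b)\<in>right_zero_pairs M. infl M eX \<rho>U nU a = infl M eX \<rho>U nU b \<and> infl M eY \<rho>V nV a = infl M eY \<rho>V nV b
      \<and> (\<forall>d\<in>cocycles M (infl M eX \<rho>U nU) nU (infl M eY \<rho>V nV) nV. d a = d b)"
    using R.zpair_infl[OF assms(5) repU] R.zpair_infl[OF assms(6) repV]
      R.zpair_cocycle(1)[OF assms(5) assms(6) assms(7) repU repV] by blast
  have PRl: "\<forall>(a, b)\<in>left_zero_pairs M. infl M eY \<rho>V nV a = infl M eY \<rho>V nV b \<and> infl M eX \<rho>U nU a = infl M eX \<rho>U nU b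
      \<and> (\<forall>d\<in>cocycles M (infl M eY \<rho>V nV) nV (infl M eX \<rho>U nU) nU. d a = d b)"
    using R.zpair_infl[OF assms(5) repU] R.zpair_infl[OF assms(6) repV]
      R.zpair_cocycle(2)[OF assms(5) assms(6) assms(7) repU repV] by blast
  have 1: "ext1_dim M (infl M eX \<rho>U nU) nU (infl M eY \<rho>V nV) nV
           = ext1_dim (M_l M) (infl_quot M eX \<rho>U nU) nU (infl_quot M eY \<rho>V nV) nV"
    unfolding M_l_def qU qV by (rule quot_ext1[OF assms(1) Uc Vc Um Vm Pr PRr])
  have 2: "ext1_dim M (infl M eY \<rho>V nV) nV (infl M eX \<rho>U nU) nU
           = ext1_dim (M_r M) (infl_quot M eY \<rho>V nV) nV (infl_quot M eX \<rho>U nU) nU"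
    unfolding M_r_def qU qV by (rule quot_ext1[OF assms(1) Vc Uc Vm Um Pl PRl])
  show ?thesis using 1 2 by simp
qed

end
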